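(* For all integers $n\ge 1$ and $\ell\ge 2$, \[\binom{n}{2}-(n-1)\le \max(n,\ell)\le \binom{n}{2}-\left\lfloor\frac{n}{2}\right\rfloor.\]
   Context: All graphs are finite and simple. Vertex labels lie in $\mathbb{Z}_\ell$. In the neighborhood Lights Out game on a graph $G$, one starts with a labeling $V(G)\to\mathbb{Z}_\ell$; toggling a vertex $v$ adds $1$ (mod $\ell$) to the label of every vertex in the closed neighborhood $N[v]$; the game is won when every label is $0$. $G$ is $N$-AW (always winnable) if the game can be won from every initial labeling. $\max(n,\ell)$ is the maximum number of edges of an $N$-AW graph on $n$ vertices. *)

theory Defs
  imports Main
begin

definition simple_graph :: "nat \<Rightarrow> nat set set \<Rightarrow> bool" where
  "simple_graph n E \<longleftrightarrow> E \<subseteq> {{u, v} | u v. u < n \<and> v < n \<and> u \<noteq> v}"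

definition closed_nbhd :: "nat set set \<Rightarrow> nat \<Rightarrow> nat set" where
  "closed_nbhd E v = insert v {u. {u, v} \<in> E}"

text \<open>The labeling f (labels in Z_l, represented by 0..l-1) can be turned to all zeros
  by toggling each vertex v exactly t v times (the order of toggles is irrelevant;
  toggling v adds 1 mod l to every label in N[v]).\<close>
definition winnable_from :: "nat \<Rightarrow> nat \<Rightarrow> nat set set \<Rightarrow> (nat \<Rightarrow> nat) \<Rightarrow> bool" where
  "winnable_from n l E f \<longleftrightarrow>
     (\<exists>t :: nat \<Rightarrow> nat. \<forall>u < n.
        (f u + (\<Sum>v \<in> {v. v < n \<and> u \<in> closed_nbhd E v}. t v)) mod l = 0)"

definition N_AW :: "nat \<Rightarrow> nat \<Rightarrow> nat set set \<Rightarrow> bool" where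
  "N_AW n l E \<longleftrightarrow> (\<forall>f :: nat \<Rightarrow> nat. (\<forall>u < n. f u < l) \<longrightarrow> winnable_from n l E f)"

text \<open>max(n,l): maximum number of edges of an N-AW graph on n vertices.\<close>
definition maxAW :: "nat \<Rightarrow> nat \<Rightarrow> nat" where
  "maxAW n l = Max {card E | E. simple_graph n E \<and> N_AW n l E}"

end

theory Submission
  imports Defs
begin


definition Allp :: "nat \<Rightarrow> nat set set" where
  "Allp n = {{u, v} | u v. u < n \<and> v < n \<and> u \<noteq> v}"

lemma Allp_eq: "Allp n = {B. B \<subseteq> {..<n} \<and> card B = 2}"
  unfolding Allp_def by (auto simp: card_2_iff)

lemma card_Allp: "card (Allp n) = n choose 2"
  unfolding Allp_eq by (simp add: n_subsets)

lemma finite_Allp: "finite (Allp n)"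
  unfolding Allp_eq by (rule finite_subset[of _ "Pow {..<n}"]) auto

lemma no_two_full:
  assumes aw: "N_AW n l E" and l: "l \<ge> 2"
    and u: "u < n" and v: "v < n" and uv: "u \<noteq> v"
    and fu: "\<forall>w<n. w \<noteq> u \<longrightarrow> {u, w} \<in> E"
    and fv: "\<forall>w<n. w \<noteq> v \<longrightarrow> {v, w} \<in> E"
  shows False
proof -
  define f where "f = (\<lambda>x::nat. if x = v then 1 else (0::nat))"
  have "\<forall>x<n. f x < l" using l by (auto simp: f_def)
  then have "winnable_from n l E f" using aw by (auto simp: N_AW_def)
  then obtain t where t: "\<forall>x<n. (f x + (\<Sum>w \<in> {w. w < n \<and> x \<in> closed_nbhd E w}. t w)) mod l = 0"
    unfolding winnable_from_def by blast
  have su: "{w. w < n \<and> u \<in> closed_nbhd E w} = {..<n}"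
    using fu by (auto simp: closed_nbhd_def insert_commute)
  have sv: "{w. w < n \<and> v \<in> closed_nbhd E w} = {..<n}"
    using fv by (auto simp: closed_nbhd_def insert_commute)
  have a0: "(f u + (\<Sum>w \<in> {w. w < n \<and> u \<in> closed_nbhd E w}. t w)) mod l = 0" using t u by blast
  have a: "(\<Sum>w<n. t w) mod l = 0" using a0 unfolding su using uv by (simp add: f_def)
  have b0: "(f v + (\<Sum>w \<in> {w. w < n \<and> v \<in> closed_nbhd E w}. t w)) mod l = 0" using t v by blast
  have b: "(1 + (\<Sum>w<n. t w)) mod l = 0" using b0 unfolding sv by (simp add: f_def)
  have "(1 + (\<Sum>w<n. t w)) mod l = (1 + (\<Sum>w<n. t w) mod l) mod l" by (metis mod_add_right_eq)
  also have "\<dots> = 1" using a l by simp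
  finally show False using b by simp
qed

lemma upper:
  assumes sg: "simple_graph n E" and aw: "N_AW n l E" and l: "l \<ge> 2"
  shows "card E \<le> (n choose 2) - n div 2"
proof -
  have EA: "E \<subseteq> Allp n" using sg by (auto simp: simple_graph_def Allp_def)
  define D where "D = Allp n - E"
  have cE: "card E = (n choose 2) - card D"
  proof -
    have "card E \<le> card (Allp n)" by (rule card_mono[OF finite_Allp EA])
    then show ?thesis unfolding D_def card_Allp[symmetric]
      using card_Diff_subset[OF finite_subset[OF EA finite_Allp] EA] by simp
  qed
  define full where "full u \<longleftrightarrow> u < n \<and> (\<forall>w<n. w \<noteq> u \<longrightarrow> {u, w} \<in> E)" for u
  define W where "W = {u. u < n \<and> \<not> full u}"
  have cW: "n - 1 \<le> card W"
  proof (cases "\<exists>w. full w")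
    case False
    then have "W = {..<n}" by (auto simp: W_def)
    then show ?thesis by simp
  next
    case True
    then obtain w where w: "full w" by blast
    have "{..<n} - {w} \<subseteq> W"
    proof
      fix x assume x: "x \<in> {..<n} - {w}"
      have "\<not> full x"
      proof
        assume "full x"
        then show False using no_two_full[OF aw l, of x w] w x by (auto simp: full_def)
      qed
      then show "x \<in> W" using x by (auto simp: W_def)
    qed
    then have "card ({..<n} - {w}) \<le> card W"
      by (rule card_mono[rotated]) (auto simp: W_def)
    moreover have "card ({..<n} - {w}) \<ge> n - 1" using card_Diff1_le[of "{..<n}" w]
      by (metis card_Diff_singleton_if card_lessThan diff_le_self finite_lessThan le_refl)
    ultimately show ?thesis by simp
  qed
  have WD: "W \<subseteq> \<Union>D"
  proof
    fix x assume "x \<in> W"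
    then obtain y where y: "y < n" "y \<noteq> x" "{x, y} \<notin> E" and x: "x < n"
      by (auto simp: W_def full_def)
    then have "{x, y} \<in> D" by (auto simp: D_def Allp_def)
    then show "x \<in> \<Union>D" by auto
  qed
  have "card W \<le> card (\<Union>D)"
    by (rule card_mono[OF _ WD]) (use finite_Allp in \<open>auto simp: D_def Allp_def\<close>)
  also have "\<dots> \<le> sum card D" by (rule card_Union_le_sum_card)
  also have "sum card D = sum (\<lambda>_. 2) D"
    by (rule sum.cong) (auto simp: D_def Allp_def)
  also have "\<dots> = 2 * card D" by simp
  finally have "n - 1 \<le> 2 * card D" using cW by simp
  then have "n div 2 \<le> card D" by linarith
  then show ?thesis using cE by simp
qed



lemma winnable_int:
  fixes t :: "nat \<Rightarrow> int"
  assumes l: "l > 0"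
    and h: "\<forall>u<n. (int (f u) + (\<Sum>v \<in> {v. v < n \<and> u \<in> closed_nbhd E v}. t v)) mod int l = 0"
  shows "winnable_from n l E f"
  unfolding winnable_from_def
proof (intro exI allI impI)
  fix u assume u: "u < n"
  define S where "S = {v. v < n \<and> u \<in> closed_nbhd E v}"
  define t' where "t' = (\<lambda>v. nat (t v mod int l))"
  have t': "int (t' v) = t v mod int l" for v using l by (simp add: t'_def)
  have "int ((f u + (\<Sum>v \<in> S. t' v)) mod l) = (int (f u) + (\<Sum>v \<in> S. t v mod int l)) mod int l"
    by (simp add: of_nat_mod t')
  also have "\<dots> = (int (f u) + (\<Sum>v \<in> S. t v mod int l) mod int l) mod int l"
    by (simp add: mod_add_right_eq)
  also have "(\<Sum>v \<in> S. t v mod int l) mod int l = (\<Sum>v \<in> S. t v) mod int l"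
    by (rule mod_sum_eq)
  also have "(int (f u) + (\<Sum>v \<in> S. t v) mod int l) mod int l = (int (f u) + (\<Sum>v \<in> S. t v)) mod int l"
    by (simp add: mod_add_right_eq)
  also have "\<dots> = 0" using h u by (simp add: S_def)
  finally show "(f u + (\<Sum>v \<in> {v. v < n \<and> u \<in> closed_nbhd E v}. t' v)) mod l = 0"
    by (simp add: S_def)
qed

lemma empty_AW: "l > 0 \<Longrightarrow> N_AW n l {}"
  unfolding N_AW_def
proof (intro allI impI)
  fix f :: "nat \<Rightarrow> nat" assume "l > 0"
  show "winnable_from n l {} f"
  proof (rule winnable_int[where t = "\<lambda>v. - int (f v)"])
    show "l > 0" by fact
    show "\<forall>u<n. (int (f u) + (\<Sum>v \<in> {v. v < n \<and> u \<in> closed_nbhd {} v}. - int (f v))) mod int l = 0"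
    proof (intro allI impI)
      fix u assume "u < n"
      then have "{v. v < n \<and> u \<in> closed_nbhd {} v} = {u}" by (auto simp: closed_nbhd_def)
      then show "(int (f u) + (\<Sum>v \<in> {v. v < n \<and> u \<in> closed_nbhd {} v}. - int (f v))) mod int l = 0"
        by simp
    qed
  qed
qed

definition hh :: "nat \<Rightarrow> nat \<Rightarrow> nat \<Rightarrow> bool" where
  "hh n u v \<longleftrightarrow> u < 2 * (n div 2) \<and> v < 2 * (n div 2) \<and> u \<noteq> v \<and>
     (u div 2 = v div 2 \<or> (even u \<and> even v \<and> (u = 0 \<or> v = 0)))"

definition Ew :: "nat \<Rightarrow> nat set set" where
  "Ew n = {{u, v} | u v. u < n \<and> v < n \<and> u \<noteq> v \<and> \<not> hh n u v}"

lemma hh_sym: "hh n u v = hh n v u"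
  unfolding hh_def by auto

lemma hh_lt: "hh n u v \<Longrightarrow> v < n"
  unfolding hh_def by auto

lemma Ew_mem: "{u, v} \<in> Ew n \<longleftrightarrow> u < n \<and> v < n \<and> u \<noteq> v \<and> \<not> hh n u v"
proof
  assume "{u, v} \<in> Ew n"
  then obtain a b where ab: "{u, v} = {a, b}" "a < n" "b < n" "a \<noteq> b" "\<not> hh n a b"
    unfolding Ew_def by blast
  then show "u < n \<and> v < n \<and> u \<noteq> v \<and> \<not> hh n u v"
    by (auto simp: doubleton_eq_iff hh_sym)
next
  assume "u < n \<and> v < n \<and> u \<noteq> v \<and> \<not> hh n u v"
  then show "{u, v} \<in> Ew n" unfolding Ew_def by blast
qed

lemma nbhd_Ew:
  assumes "u < n"
  shows "{v. v < n \<and> u \<in> closed_nbhd (Ew n) v} = {..<n} - {v. hh n u v}"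
proof (rule set_eqI)
  fix v
  have "\<not> hh n u u" by (simp add: hh_def)
  then show "v \<in> {v. v < n \<and> u \<in> closed_nbhd (Ew n) v} \<longleftrightarrow> v \<in> {..<n} - {v. hh n u v}"
    using assms by (cases "u = v") (auto simp: closed_nbhd_def Ew_mem)
qed

lemma H0:
  assumes "1 \<le> n div 2"
  shows "{v. hh n 0 v} = insert 1 ((\<lambda>i. 2 * i) ` {1..<n div 2})"
proof (rule set_eqI)
  fix v
  show "v \<in> {v. hh n 0 v} \<longleftrightarrow> v \<in> insert 1 ((\<lambda>i. 2 * i) ` {1..<n div 2})"
  proof
    assume "v \<in> {v. hh n 0 v}"
    then have h: "v < 2 * (n div 2)" "v \<noteq> 0" "v div 2 = 0 \<or> even v" by (auto simp: hh_def)
    show "v \<in> insert 1 ((\<lambda>i. 2 * i) ` {1..<n div 2})"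
    proof (cases "v div 2 = 0")
      case True
      then have "v = 1" using h by linarith
      then show ?thesis by simp
    next
      case False
      then have "even v" using h by auto
      then have "v = 2 * (v div 2)" by simp
      moreover have "v div 2 \<in> {1..<n div 2}" using h False by auto
      ultimately show ?thesis by blast
    qed
  next
    assume "v \<in> insert 1 ((\<lambda>i. 2 * i) ` {1..<n div 2})"
    then show "v \<in> {v. hh n 0 v}" using assms by (auto simp: hh_def)
  qed
qed

lemma Heven:
  assumes "1 \<le> i" "i < n div 2"
  shows "{v. hh n (2 * i) v} = {2 * i + 1, 0}"
proof (rule set_eqI)
  fix v
  show "v \<in> {v. hh n (2 * i) v} \<longleftrightarrow> v \<in> {2 * i + 1, 0}"
  proof
    assume "v \<in> {v. hh n (2 * i) v}"
    then have h: "v < 2 * (n div 2)" "v \<noteq> 2 * i" "i = v div 2 \<or> (even v \<and> v = 0)"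
      using assms by (auto simp: hh_def)
    then show "v \<in> {2 * i + 1, 0}" by auto
  next
    assume "v \<in> {2 * i + 1, 0}"
    then show "v \<in> {v. hh n (2 * i) v}" using assms by (auto simp: hh_def)
  qed
qed

lemma Hodd:
  assumes "i < n div 2"
  shows "{v. hh n (2 * i + 1) v} = {2 * i}"
proof (rule set_eqI)
  fix v
  show "v \<in> {v. hh n (2 * i + 1) v} \<longleftrightarrow> v \<in> {2 * i}"
  proof
    assume "v \<in> {v. hh n (2 * i + 1) v}"
    then have h: "v < 2 * (n div 2)" "v \<noteq> 2 * i + 1" "i = v div 2"
      using assms by (auto simp: hh_def)
    then show "v \<in> {2 * i}" by auto
  next
    assume "v \<in> {2 * i}"
    then show "v \<in> {v. hh n (2 * i + 1) v}" using assms by (auto simp: hh_def)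
  qed
qed

lemma Htop:
  assumes "2 * (n div 2) \<le> u"
  shows "{v. hh n u v} = {}"
  using assms by (auto simp: hh_def)

lemma sum_pairs: fixes k :: nat and g :: "nat \<Rightarrow> int" shows "(\<Sum>v<2 * k. g v) = (\<Sum>i<k. g (2 * i)) + (\<Sum>i<k. (g (2 * i + 1) :: int))"
proof (induct k)
  case 0
  then show ?case by simp
next
  case (Suc k)
  have e: "2 * Suc k = Suc (Suc (2 * k))" by simp
  show ?case unfolding e sum.lessThan_Suc Suc by simp
qed

lemma sum_split0:
  fixes k :: nat
  assumes "1 \<le> k" shows "sum g {..<k} = g 0 + sum g {1..<k}"
proof -
  have "{..<k} = insert 0 {1..<k}" using assms by auto
  then show ?thesis by simp
qed

lemma Ew_AW:
  assumes n3: "3 \<le> n" and l: "l > 0"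
  shows "N_AW n l (Ew n)"
  unfolding N_AW_def
proof (intro allI impI)
  fix f :: "nat \<Rightarrow> nat"
  define k where "k = n div 2"
  have k1: "1 \<le> k" using n3 by (simp add: k_def)
  define F where "F = (\<lambda>v. int (f v))"
  define G where "G = (\<Sum>i<k. F (2 * i)) - (int k - 2) * F 1"
  define T where "T = (if even n then - G else - F (2 * k))"
  define A1 where "A1 = (\<Sum>j\<in>{1..<k}. F (2 * j + 1))"
  define t where "t = (\<lambda>v. if v = 2 * k then - T - G else if even v then T + F (v + 1)
      else if v = 1 then T + F 0 - (int k - 1) * T - A1 else F (v - 1) - F 1)"
  have te: "t (2 * i) = T + F (2 * i + 1)" if "i < k" for i using that by (simp add: t_def)
  have t1: "t 1 = T + F 0 - (int k - 1) * T - A1" using k1 by (simp add: t_def)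
  have to: "t (2 * i + 1) = F (2 * i) - F 1" if "1 \<le> i" "i < k" for i
  proof -
    have "2 * i + 1 \<noteq> 2 * k" by presburger
    moreover have "2 * i + 1 \<noteq> 1" using that by simp
    ultimately show ?thesis by (simp add: t_def)
  qed
  have t0: "t 0 = T + F 1" using te[of 0] k1 by simp
  have ttop: "t (2 * k) = - T - G" by (simp add: t_def)
  have S1: "(\<Sum>v<2 * k. t v) = 2 * T + G"
  proof -
    have "(\<Sum>i<k. t (2 * i)) = (\<Sum>i<k. T + F (2 * i + 1))" by (rule sum.cong) (simp_all add: te)
    also have "\<dots> = int k * T + (\<Sum>i<k. F (2 * i + 1))" by (simp add: sum.distrib)
    also have "(\<Sum>i<k. F (2 * i + 1)) = F 1 + A1" by (simp add: sum_split0[OF k1] A1_def)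
    finally have a: "(\<Sum>i<k. t (2 * i)) = int k * T + (F 1 + A1)" .
    have "(\<Sum>i<k. t (2 * i + 1)) = t 1 + (\<Sum>i\<in>{1..<k}. t (2 * i + 1))"
      by (simp add: sum_split0[OF k1])
    also have "(\<Sum>i\<in>{1..<k}. t (2 * i + 1)) = (\<Sum>i\<in>{1..<k}. F (2 * i) - F 1)"
      by (rule sum.cong[OF refl], rule to) auto
    also have "\<dots> = (\<Sum>i\<in>{1..<k}. F (2 * i)) - (int k - 1) * F 1"
      using k1 by (simp add: sum_subtractf of_nat_diff)
    finally have b: "(\<Sum>i<k. t (2 * i + 1)) = t 1 + ((\<Sum>i\<in>{1..<k}. F (2 * i)) - (int k - 1) * F 1)" .
    have c: "(\<Sum>i<k. F (2 * i)) = F 0 + (\<Sum>i\<in>{1..<k}. F (2 * i))" by (simp add: sum_split0[OF k1])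
    show ?thesis unfolding sum_pairs a b t1 G_def c by (simp add: algebra_simps)
  qed
  have S2: "(\<Sum>v<n. t v) = T"
  proof (cases "even n")
    case True
    then have "n = 2 * k" by (simp add: k_def)
    then show ?thesis using S1 True by (simp add: T_def)
  next
    case False
    then have "n = Suc (2 * k)" by (simp add: k_def)
    then show ?thesis using S1 ttop by simp
  qed
  show "winnable_from n l (Ew n) f"
  proof (rule winnable_int[where t = t])
    show "l > 0" by (rule l)
    show "\<forall>u<n. (int (f u) + (\<Sum>v\<in>{v. v < n \<and> u \<in> closed_nbhd (Ew n) v}. t v)) mod int l = 0"
    proof (intro allI impI)
      fix u assume u: "u < n"
      have key: "F u + T - (\<Sum>v\<in>{v. hh n u v}. t v) = 0"
      proof (cases "2 * k \<le> u")
        case True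
        then have "u = 2 * k" "odd n" using u by (auto simp: k_def)
        moreover have "{v. hh n u v} = {}" using True Htop k_def by simp
        ultimately show ?thesis by (simp add: T_def)
      next
        case False
        show ?thesis
        proof (cases "even u")
          case True
          define i where "i = u div 2"
          have ui: "u = 2 * i" using True by (simp add: i_def)
          have ik: "i < k" using False ui by simp
          show ?thesis
          proof (cases "i = 0")
            case True
            then have u0: "u = 0" using ui by simp
            have H: "{v. hh n u v} = insert 1 ((\<lambda>i. 2 * i) ` {1..<k})"
              using H0[of n] k1 u0 by (simp add: k_def)
            have nin: "1 \<notin> (\<lambda>i. 2 * i) ` {1..<k}" by auto
            have inj: "inj_on (\<lambda>i::nat. 2 * i) {1..<k}" by (auto simp: inj_on_def)
            have "(\<Sum>v\<in>{v. hh n u v}. t v) = t 1 + (\<Sum>i\<in>{1..<k}. t (2 * i))"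
              unfolding H using nin inj by (simp add: sum.reindex)
            also have "(\<Sum>i\<in>{1..<k}. t (2 * i)) = (\<Sum>i\<in>{1..<k}. T + F (2 * i + 1))"
              by (rule sum.cong) (simp_all add: te)
            also have "\<dots> = (int k - 1) * T + A1"
              using k1 by (simp add: sum.distrib A1_def of_nat_diff)
            finally show ?thesis using t1 u0 by (simp add: algebra_simps)
          next
            case False
            then have H: "{v. hh n u v} = {2 * i + 1, 0}"
              using Heven[of i n] ik ui by (simp add: k_def)
            show ?thesis unfolding H using to[of i] ik False t0 ui by simp
          qed
        next
          case odd: False
          define i where "i = u div 2"
          have ui: "u = 2 * i + 1" using odd by (simp add: i_def)
          have ik: "i < k" using False ui by simp
          have H: "{v. hh n u v} = {2 * i}" using Hodd[of i n] ik ui by (simp add: k_def)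
          show ?thesis unfolding H using te[OF ik] ui by simp
        qed
      qed
      have sub: "{v. hh n u v} \<subseteq> {..<n}" using hh_lt by auto
      have "(\<Sum>v\<in>{v. v < n \<and> u \<in> closed_nbhd (Ew n) v}. t v) = (\<Sum>v<n. t v) - (\<Sum>v\<in>{v. hh n u v}. t v)"
        unfolding nbhd_Ew[OF u] by (rule sum_diff) (simp_all add: sub)
      then show "(int (f u) + (\<Sum>v\<in>{v. v < n \<and> u \<in> closed_nbhd (Ew n) v}. t v)) mod int l = 0"
      proof -
        have "int (f u) + (T - (\<Sum>v\<in>{v. hh n u v}. t v)) = 0" using key unfolding F_def by linarith
        then show ?thesis using S2 \<open>(\<Sum>v\<in>{v. v < n \<and> u \<in> closed_nbhd (Ew n) v}. t v) = _\<close> by simp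
      qed
    qed
  qed
qed

lemma Ew_sg: "simple_graph n (Ew n)"
  unfolding simple_graph_def Ew_def by blast

lemma Ew_sub: "Ew n \<subseteq> Allp n"
  unfolding Allp_def Ew_def by blast

lemma sg_sub: "simple_graph n E \<Longrightarrow> E \<subseteq> Allp n"
  unfolding simple_graph_def Allp_def by blast

lemma Ew_card: "(n choose 2) - (n - 1) \<le> card (Ew n)"
proof -
  define k where "k = n div 2"
  define Hp where "Hp = (\<lambda>i. {2 * i, 2 * i + 1}) ` {..<k} \<union> (\<lambda>i. {0, 2 * i}) ` {1..<k}"
  have cH: "card Hp \<le> n - 1"
  proof -
    have "card Hp \<le> card ((\<lambda>i. {2 * i, 2 * i + 1}) ` {..<k}) + card ((\<lambda>i. {0, 2 * i}) ` {1..<k})"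
      unfolding Hp_def by (rule card_Un_le)
    also have "\<dots> \<le> k + (k - 1)"
      using card_image_le[of "{..<k}" "\<lambda>i. {2 * i, 2 * i + 1}"] card_image_le[of "{1..<k}" "\<lambda>i. {0, 2 * i}"]
      by simp
    finally show ?thesis by (simp add: k_def)
  qed
  have sub: "Allp n - Hp \<subseteq> Ew n"
  proof
    fix e assume e: "e \<in> Allp n - Hp"
    then obtain u v where uv: "e = {u, v}" "u < n" "v < n" "u \<noteq> v" unfolding Allp_def by blast
    have "\<not> hh n u v"
    proof
      assume h: "hh n u v"
      then have hu: "u < 2 * k" "v < 2 * k" by (auto simp: hh_def k_def)
      have "e \<in> Hp"
      proof (cases "u div 2 = v div 2")
        case True
        define i where "i = u div 2"
        have "i < k" using hu by (simp add: i_def)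
        moreover have "e = {2 * i, 2 * i + 1}" using True uv by (auto simp: i_def)
        ultimately show ?thesis unfolding Hp_def by blast
      next
        case False
        then have ev: "even u" "even v" "u = 0 \<or> v = 0" using h by (auto simp: hh_def)
        show ?thesis
        proof (cases "u = 0")
          case True
          define j where "j = v div 2"
          have "v = 2 * j" using ev by (simp add: j_def)
          moreover have "1 \<le> j" "j < k" using uv True hu \<open>v = 2 * j\<close> by auto
          ultimately show ?thesis using uv True unfolding Hp_def by auto
        next
          case False
          then have v0: "v = 0" using ev by simp
          define j where "j = u div 2"
          have "u = 2 * j" using ev by (simp add: j_def)
          moreover have "1 \<le> j" "j < k" using uv v0 hu \<open>u = 2 * j\<close> by auto
          ultimately show ?thesis using uv v0 unfolding Hp_def by (auto simp: insert_commute)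
        qed
      qed
      then show False using e by simp
    qed
    then show "e \<in> Ew n" using uv Ew_mem by simp
  qed
  have fH: "finite Hp" unfolding Hp_def by simp
  have "(n choose 2) - (n - 1) \<le> card (Allp n) - card Hp" using cH card_Allp by simp
  also have "\<dots> \<le> card (Allp n - Hp)" by (rule diff_card_le_card_Diff[OF fH])
  also have "\<dots> \<le> card (Ew n)"
    by (rule card_mono[OF finite_subset[OF Ew_sub finite_Allp] sub])
  finally show ?thesis .
qed

theorem proposition4p1:
  fixes n l :: nat
  assumes "n \<ge> 1" and "l \<ge> 2"
  shows "(n choose 2) - (n - 1) \<le> maxAW n l \<and> maxAW n l \<le> (n choose 2) - n div 2"
proof -
  define S where "S = {card E | E. simple_graph n E \<and> N_AW n l E}"
  have mx: "maxAW n l = Max S" by (simp add: maxAW_def S_def)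
  have fin: "finite S"
  proof (rule finite_subset)
    show "S \<subseteq> {..card (Allp n)}"
      unfolding S_def using sg_sub card_mono[OF finite_Allp] by fastforce
  qed simp
  have l0: "l > 0" using assms by simp
  obtain c where c: "c \<in> S" "(n choose 2) - (n - 1) \<le> c"
  proof (cases "3 \<le> n")
    case True
    show ?thesis
      by (rule that[of "card (Ew n)"]) (use Ew_sg Ew_AW[OF True l0] Ew_card in \<open>auto simp: S_def\<close>)
  next
    case False
    then have "n = 1 \<or> n = 2" using assms by auto
    then have "(n choose 2) - (n - 1) = 0" by auto
    moreover have "0 \<in> S" unfolding S_def
      using empty_AW[OF l0, of n] by (force simp: simple_graph_def)
    ultimately show ?thesis using that by auto
  qed
  have ne: "S \<noteq> {}" using c by auto
  have lo: "(n choose 2) - (n - 1) \<le> maxAW n l"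
    unfolding mx using c Max_ge[OF fin c(1)] by linarith
  have "Max S \<in> S" by (rule Max_in[OF fin ne])
  then obtain E where E: "Max S = card E" "simple_graph n E" "N_AW n l E" unfolding S_def by blast
  have up: "maxAW n l \<le> (n choose 2) - n div 2"
    unfolding mx E(1) using upper[OF E(2) E(3) assms(2)] .
  show ?thesis using lo up by simp
qed

end
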